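(* Let $1\le m\le k$, let $v_0,\pi_1,v_1,\dots,\pi_k$ be generated by Approximate Value Iteration with errors $\epsilon_1,\dots,\epsilon_{k-1}$, let $\epsilon_\infty=\max_{1\le j<k}\|\epsilon_j\|_\infty$, and let $\pi_{k,m}$ be the periodic non-stationary policy $\pi_k\,\pi_{k-1}\cdots\pi_{k-m+1}\,\pi_k\cdots\pi_{k-m+1}\cdots$. Then $$\|T_{\pi_k}v_{k-1}-v_{\pi_{k,m}}\|_\infty\le \gamma^m\|v_{k-m}-v_{\pi_{k,m}}\|_\infty+\frac{\gamma-\gamma^m}{1-\gamma}\,\epsilon_\infty.$$
   Context: A Markov Decision Process with finite state space $S$, finite action space $A$, reward $r(s,a)$, transitions $p(s'|s,a)$, discount $\gamma\in[0,1)$. For a policy $\pi:S\to A$, $r_\pi(s)=r(s,\pi(s))$, $P_\pi(s,s')=p(s'|s,\pi(s))$, and $T_\pi v=r_\pi+\gamma P_\pi v$. The Bellman optimality operator is $Tv=\max_\pi T_\pi v$, and $\pi$ is greedy w.r.t. $v$ if $T_\pi v=Tv$. Approximate Value Iteration: from arbitrary $v_0$, for $j\ge0$ pick any $\pi_{j+1}$ greedy w.r.t. $v_j$ and set $v_{j+1}=T_{\pi_{j+1}}v_j+\epsilon_{j+1}$ with arbitrary errors $\epsilon_{j+1}:S\to\mathbb R$. A non-stationary policy $\sigma_0\sigma_1\cdots$ uses $\sigma_t$ at time $t$, with value $\sum_{t\ge0}\gamma^t P_{\sigma_0}\cdots P_{\sigma_{t-1}}r_{\sigma_t}$. *)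

theory Defs
  imports Complex_Main
begin

text \<open>Finite MDP: states of finite type 's, actions of finite type 'a,
  reward r s a, transition probability p s a s' = p(s'|s,a), discount gamma.\<close>

definition r_pol :: "('s \<Rightarrow> 'a \<Rightarrow> real) \<Rightarrow> ('s \<Rightarrow> 'a) \<Rightarrow> 's \<Rightarrow> real" where
  "r_pol r \<pi> = (\<lambda>s. r s (\<pi> s))"

definition P_pol :: "('s::finite \<Rightarrow> 'a \<Rightarrow> 's \<Rightarrow> real) \<Rightarrow> ('s \<Rightarrow> 'a) \<Rightarrow> ('s \<Rightarrow> real) \<Rightarrow> 's \<Rightarrow> real" where
  "P_pol p \<pi> v = (\<lambda>s. \<Sum>s'\<in>UNIV. p s (\<pi> s) s' * v s')"

definition T_pol :: "('s::finite \<Rightarrow> 'a \<Rightarrow> real) \<Rightarrow> ('s \<Rightarrow> 'a \<Rightarrow> 's \<Rightarrow> real) \<Rightarrow> real \<Rightarrow> ('s \<Rightarrow> 'a) \<Rightarrow> ('s \<Rightarrow> real) \<Rightarrow> 's \<Rightarrow> real" where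
  "T_pol r p \<gamma> \<pi> v = (\<lambda>s. r_pol r \<pi> s + \<gamma> * P_pol p \<pi> v s)"

definition T_opt :: "('s::finite \<Rightarrow> 'a::finite \<Rightarrow> real) \<Rightarrow> ('s \<Rightarrow> 'a \<Rightarrow> 's \<Rightarrow> real) \<Rightarrow> real \<Rightarrow> ('s \<Rightarrow> real) \<Rightarrow> 's \<Rightarrow> real" where
  "T_opt r p \<gamma> v = (\<lambda>s. Max ((\<lambda>\<pi>. T_pol r p \<gamma> \<pi> v s) ` UNIV))"

definition greedy :: "('s::finite \<Rightarrow> 'a::finite \<Rightarrow> real) \<Rightarrow> ('s \<Rightarrow> 'a \<Rightarrow> 's \<Rightarrow> real) \<Rightarrow> real \<Rightarrow> ('s \<Rightarrow> 'a) \<Rightarrow> ('s \<Rightarrow> real) \<Rightarrow> bool" where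
  "greedy r p \<gamma> \<pi> v \<longleftrightarrow> T_pol r p \<gamma> \<pi> v = T_opt r p \<gamma> v"

fun P_prod :: "('s::finite \<Rightarrow> 'a \<Rightarrow> 's \<Rightarrow> real) \<Rightarrow> (nat \<Rightarrow> 's \<Rightarrow> 'a) \<Rightarrow> nat \<Rightarrow> ('s \<Rightarrow> real) \<Rightarrow> 's \<Rightarrow> real" where
  "P_prod p \<sigma> 0 w = w"
| "P_prod p \<sigma> (Suc t) w = P_pol p (\<sigma> 0) (P_prod p (\<lambda>i. \<sigma> (Suc i)) t w)"

definition v_ns :: "('s::finite \<Rightarrow> 'a \<Rightarrow> real) \<Rightarrow> ('s \<Rightarrow> 'a \<Rightarrow> 's \<Rightarrow> real) \<Rightarrow> real \<Rightarrow> (nat \<Rightarrow> 's \<Rightarrow> 'a) \<Rightarrow> 's \<Rightarrow> real" where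
  "v_ns r p \<gamma> \<sigma> = (\<lambda>s. \<Sum>t. \<gamma> ^ t * P_prod p \<sigma> t (r_pol r (\<sigma> t)) s)"

definition supnorm :: "('s::finite \<Rightarrow> real) \<Rightarrow> real" where
  "supnorm v = Max (range (\<lambda>s. \<bar>v s\<bar>))"

end

theory Submission
  imports Defs
begin

lemma supnorm_ge: "\<bar>f s\<bar> \<le> supnorm f"
  unfolding supnorm_def by (rule Max_ge) auto

lemma supnorm_le: "(\<And>s. \<bar>f s\<bar> \<le> B) \<Longrightarrow> supnorm (f::'s::finite \<Rightarrow> real) \<le> B"
  unfolding supnorm_def by (subst Max_le_iff) auto

lemma P_bound:
  assumes pn: "\<And>s a s'. p s a s' \<ge> 0" and ps: "\<And>s a. (\<Sum>s'\<in>UNIV. p s a s') = 1"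
    and w: "\<And>s. \<bar>w s\<bar> \<le> B"
  shows "\<bar>P_pol p \<pi> w s\<bar> \<le> B"
proof -
  have "\<bar>P_pol p \<pi> w s\<bar> \<le> (\<Sum>s'\<in>UNIV. \<bar>p s (\<pi> s) s' * w s'\<bar>)"
    unfolding P_pol_def by (rule sum_abs)
  also have "\<dots> \<le> (\<Sum>s'\<in>UNIV. p s (\<pi> s) s' * B)"
    by (rule sum_mono) (simp add: abs_mult pn mult_left_mono w)
  also have "\<dots> = B" using ps by (simp add: sum_distrib_right[symmetric])
  finally show ?thesis .
qed

lemma P_prod_bound:
  assumes pn: "\<And>s a s'. p s a s' \<ge> 0" and ps: "\<And>s a. (\<Sum>s'\<in>UNIV. p s a s') = 1"
    and w: "\<And>s. \<bar>w s\<bar> \<le> B"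
  shows "\<bar>P_prod p \<sigma> t w s\<bar> \<le> B"
  using w
proof (induction t arbitrary: \<sigma> s)
  case 0 then show ?case by simp
next
  case (Suc t) then show ?case by (simp add: P_bound[OF pn ps])
qed

lemma v_ns_shift:
  fixes r :: "'s::finite \<Rightarrow> 'a::finite \<Rightarrow> real"
  assumes pn: "\<And>s a s'. p s a s' \<ge> 0" and ps: "\<And>s a. (\<Sum>s'\<in>UNIV. p s a s') = 1"
    and g: "0 \<le> \<gamma>" "\<gamma> < 1"
  shows "v_ns r p \<gamma> \<sigma> s = T_pol r p \<gamma> (\<sigma> 0) (v_ns r p \<gamma> (\<lambda>i. \<sigma> (Suc i))) s"
proof -
  define B where "B = (\<Sum>x\<in>UNIV. \<Sum>y\<in>UNIV. \<bar>r x y\<bar>)"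
  have rB: "\<bar>r_pol r \<pi> x\<bar> \<le> B" for \<pi> x
  proof -
    have "\<bar>r x (\<pi> x)\<bar> \<le> (\<Sum>y\<in>UNIV. \<bar>r x y\<bar>)" by (rule member_le_sum) auto
    also have "\<dots> \<le> B" unfolding B_def by (rule member_le_sum[where f="\<lambda>x. \<Sum>y\<in>UNIV. \<bar>r x y\<bar>"]) (auto intro: sum_nonneg)
    finally show ?thesis by (simp add: r_pol_def)
  qed
  have summ: "summable (\<lambda>t. \<gamma>^t * P_prod p \<tau> t (r_pol r (\<tau> t)) x)" for \<tau> x
  proof (rule summable_comparison_test')
    show "summable (\<lambda>t. \<gamma>^t * B)" by (rule summable_mult2, rule summable_geometric) (use g in auto)
    show "norm (\<gamma>^t * P_prod p \<tau> t (r_pol r (\<tau> t)) x) \<le> \<gamma>^t * B" for t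
      using P_prod_bound[OF pn ps rB[of "\<tau> t"], where \<sigma>=\<tau> and t=t and s=x] g
      by (simp add: abs_mult mult_left_mono)
  qed
  define \<sigma>' where "\<sigma>' = (\<lambda>i. \<sigma> (Suc i))"
  define f where "f = (\<lambda>t. \<gamma>^t * P_prod p \<sigma> t (r_pol r (\<sigma> t)) s)"
  define g where "g = (\<lambda>x t. \<gamma>^t * P_prod p \<sigma>' t (r_pol r (\<sigma>' t)) x)"
  have fS: "f (Suc t) = \<gamma> * (\<Sum>x\<in>UNIV. p s (\<sigma> 0 s) x * g x t)" for t
    unfolding f_def g_def \<sigma>'_def by (simp add: P_pol_def sum_distrib_left algebra_simps)
  have "v_ns r p \<gamma> \<sigma> s = suminf f" unfolding v_ns_def f_def by simp
  also have "\<dots> = f 0 + (\<Sum>t. f (Suc t))"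
    using suminf_split_head[OF summ[of \<sigma> s]] unfolding f_def by simp
  also have "(\<Sum>t. f (Suc t)) = \<gamma> * (\<Sum>t. \<Sum>x\<in>UNIV. p s (\<sigma> 0 s) x * g x t)"
    unfolding fS
    by (rule suminf_mult, rule summable_sum, rule summable_mult, unfold g_def, rule summ)
  also have "(\<Sum>t. \<Sum>x\<in>UNIV. p s (\<sigma> 0 s) x * g x t) = (\<Sum>x\<in>UNIV. \<Sum>t. p s (\<sigma> 0 s) x * g x t)"
    by (rule suminf_sum, rule summable_mult, unfold g_def, rule summ)
  also have "\<dots> = (\<Sum>x\<in>UNIV. p s (\<sigma> 0 s) x * v_ns r p \<gamma> \<sigma>' x)"
    by (rule sum.cong[OF refl], subst suminf_mult, unfold g_def, rule summ) (simp add: v_ns_def)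
  finally show ?thesis
    unfolding T_pol_def P_pol_def f_def \<sigma>'_def by simp
qed

lemma T_diff: "T_pol r p \<gamma> \<pi> a s - T_pol r p \<gamma> \<pi> b s = \<gamma> * P_pol p \<pi> (\<lambda>x. a x - b x) s"
  unfolding T_pol_def P_pol_def by (simp add: algebra_simps sum_subtractf)

lemma geo_aux: "(1 - (\<gamma>::real)) * (\<Sum>i<n. \<gamma>^(i+1)) = \<gamma> - \<gamma>^(n+1)"
proof (induction n)
  case 0 then show ?case by simp
next
  case (Suc n)
  have "(1 - \<gamma>) * (\<Sum>i<Suc n. \<gamma>^(i+1)) = (1 - \<gamma>) * (\<Sum>i<n. \<gamma>^(i+1)) + (1 - \<gamma>) * \<gamma>^(n+1)"
    by (simp add: distrib_left)
  also have "\<dots> = \<gamma> - \<gamma>^(Suc n+1)" unfolding Suc.IH by (simp add: algebra_simps)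
  finally show ?case .
qed

theorem mainTheorem6:
  fixes r :: "'s::finite \<Rightarrow> 'a::finite \<Rightarrow> real"
    and p :: "'s \<Rightarrow> 'a \<Rightarrow> 's \<Rightarrow> real"
    and \<gamma> :: real
    and v :: "nat \<Rightarrow> 's \<Rightarrow> real"
    and \<pi> :: "nat \<Rightarrow> 's \<Rightarrow> 'a"
    and \<epsilon> :: "nat \<Rightarrow> 's \<Rightarrow> real"
    and k m :: nat
  assumes p_nonneg: "\<And>s a s'. p s a s' \<ge> 0"
    and p_sum: "\<And>s a. (\<Sum>s'\<in>UNIV. p s a s') = 1"
    and gamma: "0 \<le> \<gamma>" "\<gamma> < 1"
    and m: "1 \<le> m" "m \<le> k"
    and greedy_step: "\<And>j. j < k \<Longrightarrow> greedy r p \<gamma> (\<pi> (Suc j)) (v j)"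
    and avi_step: "\<And>j. Suc j < k \<Longrightarrow> v (Suc j) = (\<lambda>s. T_pol r p \<gamma> (\<pi> (Suc j)) (v j) s + \<epsilon> (Suc j) s)"
  shows "let \<epsilon>inf = Max (insert 0 ((\<lambda>j. supnorm (\<epsilon> j)) ` {1..<k}));
             \<pi>km = (\<lambda>t. \<pi> (k - t mod m));
             vkm = v_ns r p \<gamma> \<pi>km
         in supnorm (\<lambda>s. T_pol r p \<gamma> (\<pi> k) (v (k - 1)) s - vkm s)
            \<le> \<gamma> ^ m * supnorm (\<lambda>s. v (k - m) s - vkm s) + (\<gamma> - \<gamma> ^ m) / (1 - \<gamma>) * \<epsilon>inf"
proof -
  define E where "E = Max (insert 0 ((\<lambda>j. supnorm (\<epsilon> j)) ` {1..<k}))"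
  define \<sigma> where "\<sigma> = (\<lambda>t. \<pi> (k - t mod m))"
  define V where "V = v_ns r p \<gamma> \<sigma>"
  define N where "N = supnorm (\<lambda>s. v (k - m) s - V s)"
  define sh where "sh = (\<lambda>j i. \<sigma> (i + j))"
  have E0: "0 \<le> E" unfolding E_def by (rule Max_ge) auto
  have Eeps: "\<bar>\<epsilon> j s\<bar> \<le> E" if "1 \<le> j" "j < k" for j s
  proof -
    have "supnorm (\<epsilon> j) \<le> E" unfolding E_def by (rule Max_ge) (use that in auto)
    then show ?thesis using supnorm_ge[of "\<epsilon> j" s] by linarith
  qed
  have sh0: "sh 0 = \<sigma>" unfolding sh_def by simp
  have shm: "sh m = \<sigma>" unfolding sh_def \<sigma>_def by simp
  have vsh: "v_ns r p \<gamma> (sh j) s = T_pol r p \<gamma> (\<pi> (k - j)) (v_ns r p \<gamma> (sh (Suc j))) s"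
    if "j < m" for j s
  proof -
    have a: "(\<lambda>i. sh j (Suc i)) = sh (Suc j)" unfolding sh_def by auto
    have b: "sh j 0 = \<pi> (k - j)" unfolding sh_def \<sigma>_def using that by simp
    show ?thesis using v_ns_shift[OF p_nonneg p_sum gamma, where r=r and \<sigma>="sh j" and s=s] unfolding a b .
  qed
  have claim: "\<forall>s. \<bar>T_pol r p \<gamma> (\<pi> (k - (m - 1 - n))) (v (k - 1 - (m - 1 - n))) s
       - v_ns r p \<gamma> (sh (m - 1 - n)) s\<bar> \<le> \<gamma>^(n+1) * N + (\<Sum>i<n. \<gamma>^(i+1)) * E"
    if "n < m" for n
    using that
  proof (induction n)
    case 0
    show ?case
    proof
      fix s
      have j: "m - 1 - 0 = m - 1" "k - 1 - (m - 1) = k - m" "Suc (m - 1) = m" using m by auto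
      have "T_pol r p \<gamma> (\<pi> (k - (m - 1))) (v (k - m)) s - v_ns r p \<gamma> (sh (m - 1)) s
          = \<gamma> * P_pol p (\<pi> (k - (m - 1))) (\<lambda>x. v (k - m) x - V x) s"
        using vsh[of "m - 1" s] m unfolding j shm V_def by (simp add: T_diff)
      also have "\<bar>\<dots>\<bar> \<le> \<gamma> * N"
        using P_bound[OF p_nonneg p_sum, where w="\<lambda>x. v (k - m) x - V x" and B=N and \<pi>="\<pi> (k - (m - 1))" and s=s]
           supnorm_ge[of "\<lambda>x. v (k - m) x - V x"] gamma
        unfolding N_def by (simp add: abs_mult mult_left_mono)
      finally show "\<bar>T_pol r p \<gamma> (\<pi> (k - (m - 1 - 0))) (v (k - 1 - (m - 1 - 0))) s
       - v_ns r p \<gamma> (sh (m - 1 - 0)) s\<bar> \<le> \<gamma>^(0+1) * N + (\<Sum>i<0. \<gamma>^(i+1)) * E"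
        unfolding j by simp
    qed
  next
    case (Suc n)
    define j where "j = m - 1 - Suc n"
    define B where "B = \<gamma>^(n+1) * N + (\<Sum>i<n. \<gamma>^(i+1)) * E"
    have IH: "\<bar>T_pol r p \<gamma> (\<pi> (k - Suc j)) (v (k - 1 - Suc j)) s
       - v_ns r p \<gamma> (sh (Suc j)) s\<bar> \<le> B" for s
      using Suc.IH[of] Suc.prems unfolding B_def j_def
      by (metis Suc_diff_Suc Suc_lessD diff_Suc_eq_diff_pred)
    have jm: "j < m" "Suc (k - 2 - j) < k" "Suc (k - 2 - j) = k - 1 - j" "1 \<le> k - 1 - j"
      "k - 1 - Suc j = k - 2 - j" "k - Suc j = Suc (k - 2 - j)"
      using Suc.prems m unfolding j_def by auto
    have vstep: "v (k - 1 - j) x = T_pol r p \<gamma> (\<pi> (k - Suc j)) (v (k - 1 - Suc j)) x + \<epsilon> (k - 1 - j) x" for x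
      using avi_step[OF jm(2)] unfolding jm(3) jm(5) jm(6) by (metis jm(3))
    have pt: "\<bar>v (k - 1 - j) x - v_ns r p \<gamma> (sh (Suc j)) x\<bar> \<le> B + E" for x
    proof -
      have "\<bar>\<epsilon> (k - 1 - j) x\<bar> \<le> E" using Eeps[OF jm(4)] jm(2,3) by simp
      then show ?thesis using IH[of x] vstep[of x] by linarith
    qed
    show ?case
    proof
      fix s
      have "T_pol r p \<gamma> (\<pi> (k - j)) (v (k - 1 - j)) s - v_ns r p \<gamma> (sh j) s
          = \<gamma> * P_pol p (\<pi> (k - j)) (\<lambda>x. v (k - 1 - j) x - v_ns r p \<gamma> (sh (Suc j)) x) s"
        using vsh[OF jm(1), of s] by (simp add: T_diff)
      also have "\<bar>\<dots>\<bar> \<le> \<gamma> * (B + E)"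
        using P_bound[where p=p and w="\<lambda>x. v (k - 1 - j) x - v_ns r p \<gamma> (sh (Suc j)) x" and B="B+E" and \<pi>="\<pi> (k - j)" and s=s, OF p_nonneg p_sum pt] gamma by (simp add: abs_mult mult_left_mono)
      also have "\<gamma> * (B + E) = \<gamma>^(Suc n+1) * N + (\<Sum>i<Suc n. \<gamma>^(i+1)) * E"
        unfolding B_def sum.lessThan_Suc_shift by (simp add: algebra_simps sum_distrib_left)
      finally show "\<bar>T_pol r p \<gamma> (\<pi> (k - (m - 1 - Suc n))) (v (k - 1 - (m - 1 - Suc n))) s
       - v_ns r p \<gamma> (sh (m - 1 - Suc n)) s\<bar> \<le> \<gamma>^(Suc n+1) * N + (\<Sum>i<Suc n. \<gamma>^(i+1)) * E"
        unfolding j_def .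
    qed
  qed
  have mm: "m - 1 < m" "m - 1 - (m - 1) = 0" "m - 1 + 1 = m" using m by auto
  have fin: "\<bar>T_pol r p \<gamma> (\<pi> k) (v (k - 1)) s - V s\<bar> \<le> \<gamma>^m * N + (\<Sum>i<m-1. \<gamma>^(i+1)) * E" for s
    using spec[OF claim[OF mm(1)], of s] unfolding mm sh0 V_def by simp
  have geo: "(\<Sum>i<m-1. \<gamma>^(i+1)) = (\<gamma> - \<gamma> ^ m) / (1 - \<gamma>)"
    using geo_aux[of \<gamma> "m - 1"] gamma mm(3) by (simp add: field_simps)
  show ?thesis
    unfolding Let_def E_def[symmetric] \<sigma>_def[symmetric] V_def[symmetric] N_def[symmetric]
    by (rule supnorm_le) (use fin geo in simp)
qed

end
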